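(* Let $F=\mathbb C(a,b)$ be the field of rational functions in two variables over $\mathbb C$ and $\epsilon=\frac{-1+i\sqrt3}{2}$. Let $D_3$ be the $F$-algebra generated by $x,y$ subject to $x^3=a$, $y^3=b$, $yx=\epsilon xy$ (a central division $F$-algebra of degree $3$), with the involution $\ast$ which fixes $a,b,x,y$ and acts on $\mathbb C$ by complex conjugation. Let $K=F(x)$, a $\ast$-invariant maximal subfield, with $1,y,y^2$ a right $K$-basis of $D_3$. Then: (i) the involution $\ast$ on $D_3$ is formally real; (ii) the involution $X^\#=A^{-1}X^\ast A$ on $M_3(K)$, where $X^\ast$ is the transpose with $\ast$ applied entrywise and $A=\begin{pmatrix}1&0&0\\0&0&b\\0&b&0\end{pmatrix}$ (which is the involution extending $\ast$ under the left regular representation $D_3\to M_3(K)$ with respect to $1,y,y^2$, so that $(D_3\otimes_F K)\cong(M_3(K),\#)$), is not formally real.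
   Context: An involution $\#$ on a ring $R$ is formally real if every finite sum of nonzero elements of the form $rr^\#$ ($r\in R$) is nonzero. *)

theory Defs
  imports "HOL-Analysis.Analysis" "HOL-Computational_Algebra.Polynomial_Factorial"
begin

section \<open>Formally real involutions\<close>

text \<open>An involution inv on a ring (carrier S, addition add, multiplication mult, zero zero)
  is formally real if every finite (nonempty) sum of nonzero elements of the form
  r * inv r (r in S) is nonzero.\<close>
definition formally_real ::
  "'a set \<Rightarrow> ('a \<Rightarrow> 'a \<Rightarrow> 'a) \<Rightarrow> ('a \<Rightarrow> 'a \<Rightarrow> 'a) \<Rightarrow> 'a \<Rightarrow> ('a \<Rightarrow> 'a) \<Rightarrow> bool" where
  "formally_real S pl ml zr iv \<longleftrightarrow>
     (\<forall>rs. rs \<noteq> [] \<longrightarrow> set rs \<subseteq> S \<longrightarrow> (\<forall>r\<in>set rs. ml r (iv r) \<noteq> zr) \<longrightarrow>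
        foldr pl (map (\<lambda>r. ml r (iv r)) rs) zr \<noteq> zr)"

section \<open>The field C(s,t) of rational functions in two variables\<close>

text \<open>C(s,t) = Frac(C(s)[t]) with C(s) = Frac(C[s]).\<close>
type_synonym rat2 = "complex poly fract poly fract"

text \<open>Applying a map to numerator and denominator of a fraction.\<close>
definition map_fract :: "('a::idom \<Rightarrow> 'b::idom) \<Rightarrow> 'a fract \<Rightarrow> 'b fract" where
  "map_fract f q = (let p = (SOME p. snd p \<noteq> 0 \<and> q = Fract (fst p) (snd p))
                    in Fract (f (fst p)) (f (snd p)))"

definition cnj1 :: "complex poly fract \<Rightarrow> complex poly fract" where
  "cnj1 = map_fract (map_poly cnj)"

text \<open>Complex conjugation on the coefficients; fixes both variables.\<close>
definition cnj2 :: "rat2 \<Rightarrow> rat2" where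
  "cnj2 = map_fract (map_poly cnj1)"

definition const2 :: "complex \<Rightarrow> rat2" where
  "const2 c = to_fract [: to_fract [: c :] :]"

text \<open>The first (inner) variable s and the second (outer) variable t.\<close>
definition var_s :: rat2 where "var_s = to_fract [: to_fract [: 0, 1 :] :]"
definition var_t :: rat2 where "var_t = to_fract [: 0, 1 :]"

definition eps :: complex where "eps = (-1 + \<i> * sqrt 3) / 2"

section \<open>The symbol algebra D_3 over F = C(a,b)\<close>

text \<open>F = C(a,b), with a = var_s and b = var_t.  An element of D_3 is
  sum_{i,j<3} u(i,j) x^i y^j, represented by its coefficient function u
  (zero outside {0,1,2}^2).\<close>
definition aF :: rat2 where "aF = var_s"
definition bF :: rat2 where "bF = var_t"

definition D3 :: "(nat \<times> nat \<Rightarrow> rat2) set" where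
  "D3 = {u. \<forall>i j. (3 \<le> i \<or> 3 \<le> j) \<longrightarrow> u (i, j) = 0}"

definition d3_add :: "(nat \<times> nat \<Rightarrow> rat2) \<Rightarrow> (nat \<times> nat \<Rightarrow> rat2) \<Rightarrow> (nat \<times> nat \<Rightarrow> rat2)" where
  "d3_add u v = (\<lambda>p. u p + v p)"

definition d3_zero :: "nat \<times> nat \<Rightarrow> rat2" where
  "d3_zero = (\<lambda>_. 0)"

text \<open>(x^i y^j)(x^k y^l) = eps^(jk) x^(i+k) y^(j+l), reduced with x^3 = a, y^3 = b.\<close>
definition d3_mult :: "(nat \<times> nat \<Rightarrow> rat2) \<Rightarrow> (nat \<times> nat \<Rightarrow> rat2) \<Rightarrow> (nat \<times> nat \<Rightarrow> rat2)" where
  "d3_mult u v = (\<lambda>(p, q). if p < 3 \<and> q < 3 then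
      (\<Sum>i<3. \<Sum>j<3. \<Sum>k<3. \<Sum>l<3.
         if (i + k) mod 3 = p \<and> (j + l) mod 3 = q
         then const2 eps ^ (j * k) * aF ^ ((i + k) div 3) * bF ^ ((j + l) div 3) * u (i, j) * v (k, l)
         else 0)
    else 0)"

text \<open>The involution: (c x^i y^j)^* = y^j x^i cnj(c) = eps^(ij) cnj(c) x^i y^j.\<close>
definition d3_star :: "(nat \<times> nat \<Rightarrow> rat2) \<Rightarrow> (nat \<times> nat \<Rightarrow> rat2)" where
  "d3_star u = (\<lambda>(i, j). if i < 3 \<and> j < 3 then const2 eps ^ (i * j) * cnj2 (u (i, j)) else 0)"

section \<open>M_3(K) with K = F(x)\<close>

text \<open>K = F(x) with x^3 = a is identified with C(x,b) (a = x^3), i.e. again rat2,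
  now with x = var_s and b = var_t.  The involution * on K conjugates the complex
  coefficients and fixes x and b.\<close>
definition xK :: rat2 where "xK = var_s"
definition bK :: rat2 where "bK = var_t"

definition A_mat :: "rat2^3^3" where
  "A_mat = (\<chi> i j. if i = 0 \<and> j = 0 then 1
                   else if (i = 1 \<and> j = 2) \<or> (i = 2 \<and> j = 1) then bK else 0)"

definition star_conj_transpose :: "rat2^3^3 \<Rightarrow> rat2^3^3" where
  "star_conj_transpose X = (\<chi> i j. cnj2 (X $ j $ i))"

definition sharp :: "rat2^3^3 \<Rightarrow> rat2^3^3" where
  "sharp X = matrix_inv A_mat ** star_conj_transpose X ** A_mat"

end

theory Submission imports Defs "HOL-Computational_Algebra.Formal_Laurent_Series" "HOL-Computational_Algebra.Polynomial_FPS" begin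



definition rhom :: "('a::ring_1 \<Rightarrow> 'b::ring_1) \<Rightarrow> bool" where
  "rhom f \<longleftrightarrow> (\<forall>x y. f (x + y) = f x + f y) \<and> (\<forall>x y. f (x * y) = f x * f y) \<and> f 1 = 1
     \<and> (\<forall>x. f x = 0 \<longleftrightarrow> x = 0)"

lemma rhomD:
  assumes "rhom f"
  shows "f (x + y) = f x + f y" "f (x * y) = f x * f y" "f 1 = 1" "f x = 0 \<longleftrightarrow> x = 0"
    "f 0 = 0"
  using assms unfolding rhom_def by auto

lemma rhom_uminus: "rhom f \<Longrightarrow> f (- x) = - f x"
  by (metis add.right_inverse add_eq_0_iff rhomD(1) rhomD(5))

lemma rhom_diff: "rhom f \<Longrightarrow> f (x - y) = f x - f y"
  by (metis diff_conv_add_uminus rhomD(1) rhom_uminus)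

lemma rhom_power: "rhom f \<Longrightarrow> f (x ^ n) = f x ^ n"
  by (induction n) (auto simp: rhomD)

lemma rhom_sum: "rhom f \<Longrightarrow> f (sum g A) = (\<Sum>a\<in>A. f (g a))"
  by (induction A rule: infinite_finite_induct) (auto simp: rhomD)

lemma rhom_comp: "rhom f \<Longrightarrow> rhom g \<Longrightarrow> rhom (f \<circ> g)"
  unfolding rhom_def by auto

lemma rhom_divide:
  fixes f :: "'a::field \<Rightarrow> 'b::field"
  assumes "rhom f" shows "f (x / y) = f x / f y"
proof (cases "y = 0")
  case True thus ?thesis using assms by (simp add: rhomD)
next
  case False
  have "f (x / y) * f y = f x" using False by (metis assms nonzero_divide_eq_eq rhomD(2))
  thus ?thesis using False assms by (simp add: rhomD field_simps)
qed

lemma rhom_map_poly: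
  fixes f :: "'a::idom \<Rightarrow> 'b::idom"
  assumes "rhom f" shows "rhom (map_poly f)"
proof -
  have f0: "f 0 = 0" using assms by (simp add: rhomD)
  have c: "coeff (map_poly f p) n = f (coeff p n)" for p n by (simp add: coeff_map_poly f0)
  show ?thesis unfolding rhom_def
  proof (intro conjI allI)
    fix x y show "map_poly f (x + y) = map_poly f x + map_poly f y"
      by (simp add: poly_eq_iff c rhomD[OF assms])
  next
    fix x y show "map_poly f (x * y) = map_poly f x * map_poly f y"
      by (simp add: poly_eq_iff c coeff_mult rhom_sum[OF assms] rhomD[OF assms])
  next
    show "map_poly f 1 = 1" by (simp add: poly_eq_iff c rhomD[OF assms] coeff_1)
  next
    fix x show "(map_poly f x = 0) = (x = 0)"
      by (simp add: poly_eq_iff c rhomD[OF assms])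
  qed
qed

lemma map_fract_Fract:
  fixes f :: "'a::idom \<Rightarrow> 'b::idom"
  assumes mult: "\<And>x y. f (x * y) = f x * f y" and z: "\<And>x. f x = 0 \<longleftrightarrow> x = 0" and "b \<noteq> 0"
  shows "map_fract f (Fract a b) = Fract (f a) (f b)"
proof -
  define p where "p = (SOME p. snd p \<noteq> 0 \<and> Fract a b = Fract (fst p) (snd p))"
  have "snd p \<noteq> 0 \<and> Fract a b = Fract (fst p) (snd p)"
    unfolding p_def by (rule someI[of _ "(a,b)"]) (simp add: assms)
  hence p2: "snd p \<noteq> 0" and "Fract a b = Fract (fst p) (snd p)" by auto
  hence "a * snd p = fst p * b" using assms(3) by (simp add: eq_fract)
  hence "f a * f (snd p) = f (fst p) * f b" by (metis mult)
  hence "Fract (f (fst p)) (f (snd p)) = Fract (f a) (f b)"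
    using p2 assms(3) z by (simp add: eq_fract)
  thus ?thesis unfolding map_fract_def Let_def p_def[symmetric] by simp
qed

lemma Fract_eq_0_iff: "b \<noteq> 0 \<Longrightarrow> Fract a b = 0 \<longleftrightarrow> a = 0"
  by (simp add: Zero_fract_def eq_fract)

lemma rhom_map_fract:
  fixes f :: "'a::idom \<Rightarrow> 'b::idom"
  assumes "rhom f" shows "rhom (map_fract f)"
proof -
  note h = rhomD[OF assms]
  have F: "b \<noteq> 0 \<Longrightarrow> map_fract f (Fract a b) = Fract (f a) (f b)" for a b
    by (rule map_fract_Fract) (auto simp: h)
  show ?thesis unfolding rhom_def
  proof (intro conjI allI)
    fix x y :: "'a fract"
    show "map_fract f (x + y) = map_fract f x + map_fract f y"
      by (cases x, cases y) (simp add: F h)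
  next
    fix x y :: "'a fract"
    show "map_fract f (x * y) = map_fract f x * map_fract f y"
      by (cases x, cases y) (simp add: F h)
  next
    show "map_fract f 1 = 1" by (simp add: One_fract_def F h)
  next
    fix x :: "'a fract"
    show "(map_fract f x = 0) = (x = 0)"
      by (cases x) (simp add: F h Fract_eq_0_iff)
  qed
qed

definition fext :: "('a::idom \<Rightarrow> 'b::field) \<Rightarrow> 'a fract \<Rightarrow> 'b" where
  "fext f q = (let p = (SOME p. snd p \<noteq> 0 \<and> q = Fract (fst p) (snd p))
                    in f (fst p) / f (snd p))"

lemma fext_Fract:
  fixes f :: "'a::idom \<Rightarrow> 'b::field"
  assumes "rhom f" and "b \<noteq> 0"
  shows "fext f (Fract a b) = f a / f b"
proof -
  note h = rhomD[OF assms(1)]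
  define p where "p = (SOME p. snd p \<noteq> 0 \<and> Fract a b = Fract (fst p) (snd p))"
  have "snd p \<noteq> 0 \<and> Fract a b = Fract (fst p) (snd p)"
    unfolding p_def by (rule someI[of _ "(a,b)"]) (simp add: assms)
  hence p2: "snd p \<noteq> 0" and "Fract a b = Fract (fst p) (snd p)" by auto
  hence "a * snd p = fst p * b" using assms(2) by (simp add: eq_fract)
  hence "f a * f (snd p) = f (fst p) * f b" by (metis h(2))
  hence "f (fst p) / f (snd p) = f a / f b"
    using p2 assms(2) h by (simp add: field_simps)
  thus ?thesis unfolding fext_def Let_def p_def[symmetric] by simp
qed

lemma rhom_fext:
  fixes f :: "'a::idom \<Rightarrow> 'b::field"
  assumes "rhom f" shows "rhom (fext f)"
proof -
  note h = rhomD[OF assms]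
  have F: "b \<noteq> 0 \<Longrightarrow> fext f (Fract a b) = f a / f b" for a b
    by (rule fext_Fract[OF assms])
  show ?thesis unfolding rhom_def
  proof (intro conjI allI)
    fix x y :: "'a fract"
    show "fext f (x + y) = fext f x + fext f y"
      by (cases x, cases y) (simp add: F h field_simps)
  next
    fix x y :: "'a fract"
    show "fext f (x * y) = fext f x * fext f y"
      by (cases x, cases y) (simp add: F h)
  next
    show "fext f 1 = 1" by (simp add: One_fract_def F h)
  next
    fix x :: "'a fract"
    show "(fext f x = 0) = (x = 0)"
      by (cases x) (simp add: F h Fract_eq_0_iff)
  qed
qed

lemma fext_to_fract: "rhom f \<Longrightarrow> fext f (to_fract a) = f a"
  by (simp add: to_fract_def fext_Fract rhomD)

lemma map_fract_to_fract: "rhom f \<Longrightarrow> map_fract f (to_fract a) = to_fract (f a)"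
  by (simp add: to_fract_def map_fract_Fract rhomD)


definition flsmap :: "('a::zero \<Rightarrow> 'b::zero) \<Rightarrow> 'a fls \<Rightarrow> 'b fls" where
  "flsmap h f = Abs_fls (\<lambda>n. h (fls_nth f n))"

lemma flsmap_nth: "h 0 = 0 \<Longrightarrow> fls_nth (flsmap h f) n = h (fls_nth f n)"
  unfolding flsmap_def
  by (rule nth_Abs_fls, rule eventually_mono[OF MOST_fls_neg_nth_eq_0[of f]]) simp

lemma flsmap_subdegree:
  fixes h :: "'a::zero \<Rightarrow> 'b::zero"
  assumes "\<And>x. h x = 0 \<longleftrightarrow> x = 0"
  shows "fls_subdegree (flsmap h f) = fls_subdegree f"
proof (cases "f = 0")
  case True
  hence "flsmap h f = 0" using assms by (simp add: fls_eq_iff flsmap_nth)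
  thus ?thesis using True by simp
next
  case False
  show ?thesis
    by (rule fls_subdegree_eqI) (use False assms in \<open>simp_all add: flsmap_nth\<close>)
qed

lemma rhom_flsmap:
  fixes h :: "'a::idom \<Rightarrow> 'b::idom"
  assumes "rhom h" shows "rhom (flsmap h)"
proof -
  note r = rhomD[OF assms]
  have N: "fls_nth (flsmap h f) n = h (fls_nth f n)" for f n by (simp add: flsmap_nth r)
  have S: "fls_subdegree (flsmap h f) = fls_subdegree f" for f by (rule flsmap_subdegree) (simp add: r)
  show ?thesis unfolding rhom_def
  proof (intro conjI allI)
    fix x y show "flsmap h (x + y) = flsmap h x + flsmap h y" by (simp add: fls_eq_iff N r)
  next
    fix x y :: "'a fls"
    show "flsmap h (x * y) = flsmap h x * flsmap h y"
      by (simp add: fls_eq_iff N fls_times_nth(2) S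
           rhom_sum[OF assms] r)
  next
    show "flsmap h 1 = 1" by (simp add: fls_eq_iff N r)
  next
    fix x show "(flsmap h x = 0) = (x = 0)" by (simp add: fls_eq_iff N r)
  qed
qed

definition pf :: "'a::idom poly \<Rightarrow> 'a fls" where
  "pf p = fps_to_fls (fps_of_poly p)"

lemma pf_nth: "fls_nth (pf p) n = (if n < 0 then 0 else coeff p (nat n))"
  by (simp add: pf_def)

lemma rhom_pf: "rhom pf"
  unfolding rhom_def pf_def
  by (auto simp: fps_of_poly_add fps_of_poly_mult fls_times_fps_to_fls fps_of_poly_eq_iff[of _ 0, simplified])



lemma three0: "(3::3) = 0" by simp
lemma forall3: "(\<forall>i::3. P i) \<longleftrightarrow> P 0 \<and> P 1 \<and> P 2"
  using forall_3[of P] by (auto simp: three0)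
lemma sum3: "sum f (UNIV::3 set) = f 0 + f 1 + f 2"
  using sum_3[of f] by (simp add: three0 ac_simps)

lemma rhom_cnj: "rhom cnj" by (simp add: rhom_def)
lemma rhom_cnj1: "rhom cnj1" unfolding cnj1_def by (intro rhom_map_fract rhom_map_poly rhom_cnj)
lemma rhom_cnj2: "rhom cnj2" unfolding cnj2_def by (intro rhom_map_fract rhom_map_poly rhom_cnj1)

lemma cnj2_bK: "cnj2 bK = bK"
  unfolding cnj2_def bK_def var_t_def
  by (simp add: map_fract_to_fract rhom_map_poly rhom_cnj1 rhomD[OF rhom_cnj1] map_poly_pCons)

lemma bK_nz: "bK \<noteq> 0" by (simp add: bK_def var_t_def)

definition Ainv :: "rat2^3^3" where
  "Ainv = (\<chi> i j. if i = 0 \<and> j = 0 then 1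
                   else if (i = 1 \<and> j = 2) \<or> (i = 2 \<and> j = 1) then inverse bK else 0)"

lemma A_Ainv: "A_mat ** Ainv = mat 1" "Ainv ** A_mat = mat 1"
  by (simp_all add: vec_eq_iff forall3 matrix_matrix_mult_def sum3 A_mat_def Ainv_def mat_def bK_nz)

lemma matrix_inv_A: "matrix_inv A_mat = Ainv"
proof -
  have "\<exists>B. A_mat ** B = mat 1 \<and> B ** A_mat = mat 1" using A_Ainv by blast
  hence "A_mat ** matrix_inv A_mat = mat 1 \<and> matrix_inv A_mat ** A_mat = mat 1"
    unfolding matrix_inv_def by (rule someI_ex)
  hence "matrix_inv A_mat = matrix_inv A_mat ** (A_mat ** Ainv)" using A_Ainv by simp
  also have "\<dots> = Ainv" using \<open>_ \<and> _\<close> by (simp add: matrix_mul_assoc)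
  finally show ?thesis .
qed

definition X1 :: "rat2^3^3" where "X1 = (\<chi> i j. if i = 0 \<and> j = 0 then 1 else 0)"
definition X2 :: "rat2^3^3" where
  "X2 = (\<chi> i j. if i = 0 \<and> j = 1 then 1 else if i = 0 \<and> j = 2 then - bK else 0)"

lemma cnj2_simps: "cnj2 0 = 0" "cnj2 1 = 1" "cnj2 (- bK) = - bK"
  by (simp_all add: rhomD[OF rhom_cnj2] rhom_uminus[OF rhom_cnj2] cnj2_bK)

lemma X1s: "X1 ** sharp X1 = X1"
  unfolding sharp_def matrix_inv_A
  by (simp add: vec_eq_iff forall3 matrix_matrix_mult_def sum3 A_mat_def Ainv_def sharp_def
      matrix_inv_A star_conj_transpose_def X1_def cnj2_simps)

lemma X2s: "X2 ** sharp X2 = - (X1 + X1)"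
  unfolding sharp_def matrix_inv_A
  by (simp add: vec_eq_iff forall3 matrix_matrix_mult_def sum3 A_mat_def Ainv_def sharp_def
      matrix_inv_A star_conj_transpose_def X1_def X2_def cnj2_simps bK_nz field_simps)

definition iota1 :: "complex poly fract \<Rightarrow> complex fls" where "iota1 = fext pf"
definition iota :: "rat2 \<Rightarrow> complex fls fls" where "iota = fext (pf \<circ> map_poly iota1)"
lemma rhom_iota1: "rhom iota1" unfolding iota1_def by (intro rhom_fext rhom_pf)
lemma rhom_iota: "rhom iota" unfolding iota_def by (intro rhom_fext rhom_comp rhom_pf rhom_map_poly rhom_iota1)

lemma two_nz: "(2::rat2) \<noteq> 0"
proof
  assume "(2::rat2) = 0"
  hence "iota (1 + 1) = 0" by (simp add: rhomD[OF rhom_iota])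
  hence "(1 + 1 :: complex fls fls) = 0" by (simp only: rhomD[OF rhom_iota])
  thus False by simp
qed

lemma part2: "\<not> formally_real (UNIV :: (rat2^3^3) set) (+) (**) 0 sharp"
proof -
  have nz: "X1 \<noteq> 0" "- (X1 + X1) \<noteq> 0" by (auto simp: vec_eq_iff X1_def two_nz)
  have nz2: "X2 ** sharp X2 \<noteq> 0" unfolding X2s by (rule nz(2))
  show ?thesis unfolding formally_real_def
  proof
    assume H: "\<forall>rs. rs \<noteq> [] \<longrightarrow> set rs \<subseteq> (UNIV :: (rat2^3^3) set) \<longrightarrow>
        (\<forall>r\<in>set rs. r ** sharp r \<noteq> 0) \<longrightarrow> foldr (+) (map (\<lambda>r. r ** sharp r) rs) 0 \<noteq> 0"
    have "foldr (+) (map (\<lambda>r. r ** sharp r) [X1,X1,X2]) 0 \<noteq> 0"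
      by (rule H[rule_format]) (auto simp: X1s nz nz2)
    moreover have "foldr (+) (map (\<lambda>r. r ** sharp r) [X1,X1,X2]) 0 = 0"
      by (simp add: X1s X2s)
    ultimately show False by simp
  qed
qed




definition C1 :: "complex fls \<Rightarrow> complex fls" where "C1 = flsmap cnj"
definition C2 :: "complex fls fls \<Rightarrow> complex fls fls" where "C2 = flsmap C1"
lemma rhom_C1: "rhom C1" unfolding C1_def by (intro rhom_flsmap rhom_cnj)
lemma rhom_C2: "rhom C2" unfolding C2_def by (intro rhom_flsmap rhom_C1)

lemma pf_map_cnj: "pf (map_poly cnj p) = C1 (pf p)"
  by (simp add: fls_eq_iff pf_nth C1_def flsmap_nth coeff_map_poly)

lemma iota1_cnj1: "iota1 (cnj1 q) = C1 (iota1 q)"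
proof (cases q)
  case (Fract a b)
  have "cnj1 q = Fract (map_poly cnj a) (map_poly cnj b)"
    unfolding Fract cnj1_def
    by (rule map_fract_Fract) (use Fract in \<open>simp_all add: rhomD[OF rhom_map_poly[OF rhom_cnj]]\<close>)
  hence "iota1 (cnj1 q) = pf (map_poly cnj a) / pf (map_poly cnj b)"
    using Fract by (simp add: iota1_def fext_Fract rhom_pf rhomD(4)[OF rhom_map_poly[OF rhom_cnj]])
  also have "\<dots> = C1 (pf a / pf b)" by (simp add: pf_map_cnj rhom_divide[OF rhom_C1])
  also have "\<dots> = C1 (iota1 q)" using Fract by (simp add: iota1_def fext_Fract rhom_pf)
  finally show ?thesis .
qed

lemma phi2_map_cnj1: "(pf \<circ> map_poly iota1) (map_poly cnj1 p) = C2 ((pf \<circ> map_poly iota1) p)"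
  by (simp add: fls_eq_iff pf_nth C2_def flsmap_nth coeff_map_poly rhomD[OF rhom_iota1]
      rhomD[OF rhom_C1] rhomD[OF rhom_cnj1] iota1_cnj1)

lemma iota_cnj2: "iota (cnj2 q) = C2 (iota q)"
proof (cases q)
  case (Fract a b)
  have "cnj2 q = Fract (map_poly cnj1 a) (map_poly cnj1 b)"
    unfolding Fract cnj2_def
    by (rule map_fract_Fract) (use Fract in \<open>simp_all add: rhomD[OF rhom_map_poly[OF rhom_cnj1]]\<close>)
  hence "iota (cnj2 q) = (pf \<circ> map_poly iota1) (map_poly cnj1 a) / (pf \<circ> map_poly iota1) (map_poly cnj1 b)"
    using Fract unfolding iota_def
    by (simp add: fext_Fract rhom_comp rhom_pf rhom_map_poly rhom_iota1 rhomD(4)[OF rhom_map_poly[OF rhom_cnj1]] del: comp_apply)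
  also have "\<dots> = C2 ((pf \<circ> map_poly iota1) a / (pf \<circ> map_poly iota1) b)"
    by (simp only: phi2_map_cnj1 rhom_divide[OF rhom_C2])
  also have "\<dots> = C2 (iota q)" using Fract unfolding iota_def
    by (simp add: fext_Fract rhom_comp rhom_pf rhom_map_poly rhom_iota1 del: comp_apply)
  finally show ?thesis .
qed

lemma pf_const: "pf [:c:] = fls_const c"
  by (auto simp: fls_eq_iff pf_nth coeff_pCons split: nat.split)

lemma pf_X: "pf [:0, 1:] = fls_X"
  by (auto simp: fls_eq_iff pf_nth coeff_pCons split: nat.split)

lemma iota_to_fract: "iota (to_fract p) = pf (map_poly iota1 p)"
  unfolding iota_def by (simp add: fext_to_fract rhom_comp rhom_pf rhom_map_poly rhom_iota1)

lemma iota1_to_fract: "iota1 (to_fract p) = pf p"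
  unfolding iota1_def by (simp add: fext_to_fract rhom_pf)

lemma iota_const2: "iota (const2 c) = fls_const (fls_const c)"
  by (simp add: const2_def iota_to_fract iota1_to_fract pf_const map_poly_pCons rhomD[OF rhom_iota1])

lemma iota_aF: "iota aF = fls_const fls_X"
  by (simp add: aF_def var_s_def iota_to_fract iota1_to_fract pf_const pf_X map_poly_pCons rhomD[OF rhom_iota1])

lemma iota_bF: "iota bF = fls_X"
  by (simp add: bF_def var_t_def iota_to_fract rhomD[OF rhom_iota1] map_poly_pCons pf_X)




definition v1 :: "complex fls fls \<Rightarrow> int" where "v1 g = fls_subdegree g"
definition ld :: "complex fls fls \<Rightarrow> complex fls" where "ld g = fls_nth g (v1 g)"
definition v2 :: "complex fls fls \<Rightarrow> int" where "v2 g = fls_subdegree (ld g)"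
definition lc :: "complex fls fls \<Rightarrow> complex" where "lc g = fls_nth (ld g) (v2 g)"
definition coef :: "complex fls fls \<Rightarrow> int \<Rightarrow> int \<Rightarrow> complex" where
  "coef g m1 m2 = fls_nth (fls_nth g m1) m2"

lemma ld_nz: "g \<noteq> 0 \<Longrightarrow> ld g \<noteq> 0" by (simp add: ld_def v1_def)
lemma lc_nz: "g \<noteq> 0 \<Longrightarrow> lc g \<noteq> 0" by (simp add: lc_def v2_def ld_nz)

lemma val_mult:
  assumes "g \<noteq> 0" "h \<noteq> 0"
  shows "v1 (g * h) = v1 g + v1 h" "ld (g * h) = ld g * ld h"
        "v2 (g * h) = v2 g + v2 h" "lc (g * h) = lc g * lc h"
proof -
  show 1: "v1 (g * h) = v1 g + v1 h" using assms by (simp add: v1_def)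
  show 2: "ld (g * h) = ld g * ld h" unfolding ld_def 1 by (simp add: v1_def fls_times_base)
  show 3: "v2 (g * h) = v2 g + v2 h" unfolding v2_def 2 using ld_nz[OF assms(1)] ld_nz[OF assms(2)] by simp
  show "lc (g * h) = lc g * lc h" unfolding lc_def 2 3 by (simp add: v2_def fls_times_base)
qed

lemma val_power:
  assumes "g \<noteq> 0"
  shows "v1 (g ^ n) = int n * v1 g \<and> v2 (g ^ n) = int n * v2 g \<and> lc (g ^ n) = lc g ^ n"
proof (induction n)
  case 0 thus ?case by (simp add: v1_def v2_def ld_def lc_def)
next
  case (Suc n)
  have "g ^ n \<noteq> 0" using assms by simp
  thus ?case using Suc by (simp add: val_mult[OF assms] algebra_simps)
qed

lemma val_C2:
  "v1 (C2 g) = v1 g" "ld (C2 g) = C1 (ld g)" "v2 (C2 g) = v2 g" "lc (C2 g) = cnj (lc g)"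
proof -
  show 1: "v1 (C2 g) = v1 g" unfolding v1_def C2_def by (rule flsmap_subdegree) (simp add: rhomD[OF rhom_C1])
  show 2: "ld (C2 g) = C1 (ld g)" unfolding ld_def 1 by (simp add: C2_def flsmap_nth rhomD[OF rhom_C1])
  show 3: "v2 (C2 g) = v2 g" unfolding v2_def 2 C1_def by (rule flsmap_subdegree) simp
  show "lc (C2 g) = cnj (lc g)" unfolding lc_def 2 3 by (simp add: C1_def flsmap_nth)
qed

lemma C2_nz: "g \<noteq> 0 \<Longrightarrow> C2 g \<noteq> 0" by (simp add: rhomD[OF rhom_C2])

lemma val_const: "c \<noteq> 0 \<Longrightarrow> v1 (fls_const (fls_const c)) = 0 \<and> v2 (fls_const (fls_const c)) = 0 \<and>
   lc (fls_const (fls_const c)) = c"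
  by (simp add: v1_def v2_def ld_def lc_def)

lemma val_aF: "v1 (fls_const fls_X) = 0 \<and> v2 (fls_const fls_X) = 1 \<and> lc (fls_const fls_X) = 1"
  by (simp add: v1_def v2_def ld_def lc_def)

lemma val_bF: "v1 fls_X = 1 \<and> v2 fls_X = 0 \<and> lc fls_X = 1"
  by (simp add: v1_def v2_def ld_def lc_def)

lemma coef_low:
  assumes "g \<noteq> 0" "m1 < v1 g \<or> (m1 = v1 g \<and> m2 < v2 g)"
  shows "coef g m1 m2 = 0"
  using assms by (auto simp: coef_def v1_def v2_def ld_def)

lemma coef_lead: "coef g (v1 g) (v2 g) = lc g"
  by (simp add: coef_def lc_def ld_def)

lemma coef_add: "coef (g + h) m1 m2 = coef g m1 m2 + coef h m1 m2"
  by (simp add: coef_def)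

lemma coef_0: "coef 0 m1 m2 = 0" by (simp add: coef_def)




lemma eps_nz: "eps \<noteq> 0"
proof
  assume "eps = 0"
  hence "Re eps = 0" by simp
  thus False by (simp add: eps_def)
qed

definition W :: "(nat \<times> nat \<Rightarrow> rat2) \<Rightarrow> nat \<Rightarrow> nat \<Rightarrow> int \<times> int" where
  "W r i j = (3 * v1 (iota (r (i, j))) + int j, 3 * v2 (iota (r (i, j))) + int i)"

definition lexle :: "int \<times> int \<Rightarrow> int \<times> int \<Rightarrow> bool" where
  "lexle a b \<longleftrightarrow> fst a < fst b \<or> (fst a = fst b \<and> snd a \<le> snd b)"

lemma W_mod: "i < 3 \<Longrightarrow> j < 3 \<Longrightarrow> fst (W r i j) mod 3 = int j \<and> snd (W r i j) mod 3 = int i"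
  by (simp add: W_def)

lemma iota_term:
  assumes "k < 3" "l < 3"
  shows "iota (const2 eps ^ (j * k) * aF ^ \<alpha> * bF ^ \<beta> * r (i, j) * d3_star r (k, l)) =
    fls_const (fls_const eps) ^ (j * k) * fls_const fls_X ^ \<alpha> * fls_X ^ \<beta> * iota (r (i, j)) *
    (fls_const (fls_const eps) ^ (k * l) * C2 (iota (r (k, l))))"
  using assms by (simp add: d3_star_def rhomD[OF rhom_iota] rhom_power[OF rhom_iota] iota_const2
      iota_aF iota_bF iota_cnj2)


lemma val_term:
  fixes gi gk :: "complex fls fls" and a b \<alpha> \<beta> :: nat
  assumes "gi \<noteq> 0" "gk \<noteq> 0"
  defines "G \<equiv> fls_const (fls_const eps) ^ a * fls_const fls_X ^ \<alpha> * fls_X ^ \<beta> * gi *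
    (fls_const (fls_const eps) ^ b * C2 gk)"
  shows "G \<noteq> 0 \<and> v1 G = int \<beta> + v1 gi + v1 gk \<and> v2 G = int \<alpha> + v2 gi + v2 gk \<and>
         lc G = eps ^ a * lc gi * (eps ^ b * cnj (lc gk))"
proof -
  have e: "fls_const (fls_const eps) \<noteq> (0 :: complex fls fls)" using eps_nz by simp
  have x: "fls_const fls_X \<noteq> (0 :: complex fls fls)" by simp
  have c: "C2 gk \<noteq> 0" using assms(2) by (rule C2_nz)
  note P = val_power[OF e] val_power[OF x] val_power[OF fls_X_nonzero]
  have nz: "fls_const (fls_const eps) ^ n \<noteq> (0 :: complex fls fls)"
           "fls_const fls_X ^ n \<noteq> (0 :: complex fls fls)" "fls_X ^ n \<noteq> (0 :: complex fls fls)" for n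
    using e x by simp_all
  show ?thesis unfolding G_def
    using assms(1,2) c nz
    by (simp add: val_mult P val_const[OF eps_nz] val_aF val_bF val_C2)
qed


lemma lex_strict:
  assumes "lexle M A" "lexle M B" "\<not> (A = M \<and> B = M)"
  shows "2 * fst M < fst A + fst B \<or> (2 * fst M = fst A + fst B \<and> 2 * snd M < snd A + snd B)"
  using assms unfolding lexle_def by (cases A, cases B, cases M) auto

lemma term_coef:
  fixes r :: "nat \<times> nat \<Rightarrow> rat2" and M :: "int \<times> int"
  assumes Mmin: "\<And>i j. i < 3 \<Longrightarrow> j < 3 \<Longrightarrow> r (i,j) \<noteq> 0 \<Longrightarrow> lexle M (W r i j)"
  and ijkl: "i < 3" "j < 3" "k < 3" "l < 3"
  and is_def: "int is = snd M mod 3" and js_def: "int js = fst M mod 3"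
  and p_def: "p = (2 * is) mod 3" and q_def: "q = (2 * js) mod 3"
  and m1: "3 * m1 + int q = 2 * fst M" and m2: "3 * m2 + int p = 2 * snd M"
  shows "coef (iota (if (i + k) mod 3 = p \<and> (j + l) mod 3 = q then const2 eps ^ (j * k) * aF ^ ((i + k) div 3)
             * bF ^ ((j + l) div 3) * r (i, j) * d3_star r (k, l) else 0)) m1 m2 =
     (if i = is \<and> j = js \<and> k = is \<and> l = js \<and> r (is, js) \<noteq> 0 \<and> W r is js = M
      then eps ^ (js * is) * lc (iota (r (is, js))) * (eps ^ (is * js) * cnj (lc (iota (r (is, js)))))
      else 0)"
proof (cases "(i + k) mod 3 = p \<and> (j + l) mod 3 = q")
  case False
  hence "\<not> (i = is \<and> j = js \<and> k = is \<and> l = js)" using p_def q_def by (auto simp: mult_2)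
  thus ?thesis using False by (auto simp: rhomD[OF rhom_iota] coef_0)
next
  case cond: True
  show ?thesis
  proof (cases "r (i, j) = 0 \<or> r (k, l) = 0")
    case True
    hence "iota (r (i, j)) = 0 \<or> C2 (iota (r (k, l))) = 0" by (auto simp: rhomD[OF rhom_iota] rhomD[OF rhom_C2])
    hence L: "coef (iota (const2 eps ^ (j * k) * aF ^ ((i + k) div 3)
             * bF ^ ((j + l) div 3) * r (i, j) * d3_star r (k, l))) m1 m2 = 0"
      using ijkl by (auto simp: iota_term coef_0)
    have "\<not> (i = is \<and> j = js \<and> k = is \<and> l = js \<and> r (is, js) \<noteq> 0)" using True by auto
    thus ?thesis using cond L by auto
  next
    case False
    define gi where "gi = iota (r (i, j))"
    define gk where "gk = iota (r (k, l))"
    have gi: "gi \<noteq> 0" and gk: "gk \<noteq> 0" using False by (auto simp: gi_def gk_def rhomD[OF rhom_iota])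
    define \<alpha> where "\<alpha> = (i + k) div 3"
    define \<beta> where "\<beta> = (j + l) div 3"
    define G where "G = fls_const (fls_const eps) ^ (j * k) * fls_const fls_X ^ \<alpha> * fls_X ^ \<beta> * gi *
       (fls_const (fls_const eps) ^ (k * l) * C2 gk)"
    have iG: "iota (const2 eps ^ (j * k) * aF ^ ((i + k) div 3)
             * bF ^ ((j + l) div 3) * r (i, j) * d3_star r (k, l)) = G"
      unfolding G_def gi_def gk_def \<alpha>_def \<beta>_def using ijkl(3,4) by (rule iota_term)
    have VG: "G \<noteq> 0 \<and> v1 G = int \<beta> + v1 gi + v1 gk \<and> v2 G = int \<alpha> + v2 gi + v2 gk \<and>
         lc G = eps ^ (j * k) * lc gi * (eps ^ (k * l) * cnj (lc gk))"
      unfolding G_def by (rule val_term[OF gi gk])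
    have jl: "j + l = 3 * \<beta> + q" using cond div_mult_mod_eq[of "j+l" 3] unfolding \<beta>_def by linarith
    have ik: "i + k = 3 * \<alpha> + p" using cond div_mult_mod_eq[of "i+k" 3] unfolding \<alpha>_def by linarith
    define A where "A = W r i j"
    define B where "B = W r k l"
    have A: "A = (3 * v1 gi + int j, 3 * v2 gi + int i)" by (simp add: A_def W_def gi_def)
    have B: "B = (3 * v1 gk + int l, 3 * v2 gk + int k)" by (simp add: B_def W_def gk_def)
    have E1: "3 * v1 G + int q = fst A + fst B"
    proof -
      have "int j + int l = 3 * int \<beta> + int q" using jl by linarith
      thus ?thesis using VG A B by simp
    qed
    have E2: "3 * v2 G + int p = snd A + snd B"
    proof -
      have "int i + int k = 3 * int \<alpha> + int p" using ik by linarith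
      thus ?thesis using VG A B by simp
    qed
    have lA: "lexle M A" unfolding A_def using Mmin ijkl False by auto
    have lB: "lexle M B" unfolding B_def using Mmin ijkl False by auto
    show ?thesis
    proof (cases "A = M \<and> B = M")
      case True
      have "int i = int is" using W_mod[of i j r] ijkl True is_def A_def by simp
      moreover have "int j = int js" using W_mod[of i j r] ijkl True js_def A_def by simp
      moreover have "int k = int is" using W_mod[of k l r] ijkl True is_def B_def by simp
      moreover have "int l = int js" using W_mod[of k l r] ijkl True js_def B_def by simp
      ultimately have eq: "i = is" "j = js" "k = is" "l = js" by simp_all
      have "v1 G = m1" using E1 m1 True by simp
      moreover have "v2 G = m2" using E2 m2 True by simp
      ultimately have "coef G m1 m2 = lc G" using coef_lead by metis
      thus ?thesis using iG VG cond eq True False A_def by (simp add: gi_def gk_def)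
    next
      case notM: False
      from lex_strict[OF lA lB notM]
      have "m1 < v1 G \<or> (m1 = v1 G \<and> m2 < v2 G)" using E1 E2 m1 m2 by auto
      hence "coef G m1 m2 = 0" using VG coef_low by blast
      moreover have nc: "\<not> (i = is \<and> j = js \<and> k = is \<and> l = js \<and> r (is, js) \<noteq> 0 \<and> W r is js = M)"
        using notM A_def B_def by auto
      ultimately show ?thesis by (subst if_P[OF cond], subst if_not_P[OF nc]) (simp add: iG)
    qed
  qed
qed


lemma coef_sum: "coef (sum g A) m1 m2 = (\<Sum>a\<in>A. coef (g a) m1 m2)"
  by (induction A rule: infinite_finite_induct) (auto simp: coef_add coef_0)

lemma coef_iota_sum: "coef (iota (sum g A)) m1 m2 = (\<Sum>a\<in>A. coef (iota (g a)) m1 m2)"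
  by (simp add: rhom_sum[OF rhom_iota] coef_sum)

lemma collapse4:
  assumes a: "is < 3" "js < 3"
  shows "(\<Sum>i<3::nat. \<Sum>j<3::nat. \<Sum>k<3::nat. \<Sum>l<3::nat.
     if i = is \<and> j = js \<and> k = is \<and> l = js \<and> c then (L::complex) else 0) = (if c then L else 0)"
proof -
  have "\<And>i j k. (\<Sum>l<3::nat. if i = is \<and> j = js \<and> k = is \<and> l = js \<and> c then (L::complex) else 0)
     = (if i = is \<and> j = js \<and> k = is \<and> c then L else 0)"
    using a by (auto simp: sum.delta')
  hence "\<And>i j. (\<Sum>k<3::nat. \<Sum>l<3::nat. if i = is \<and> j = js \<and> k = is \<and> l = js \<and> c then (L::complex) else 0)
     = (if i = is \<and> j = js \<and> c then L else 0)"
    using a by (auto simp: sum.delta')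
  hence "\<And>i. (\<Sum>j<3::nat. \<Sum>k<3::nat. \<Sum>l<3::nat. if i = is \<and> j = js \<and> k = is \<and> l = js \<and> c then (L::complex) else 0)
     = (if i = is \<and> c then L else 0)"
    using a by (auto simp: sum.delta')
  thus ?thesis using a by (auto simp: sum.delta')
qed

lemma r_coef:
  fixes r :: "nat \<times> nat \<Rightarrow> rat2" and M :: "int \<times> int"
  assumes Mmin: "\<And>i j. i < 3 \<Longrightarrow> j < 3 \<Longrightarrow> r (i,j) \<noteq> 0 \<Longrightarrow> lexle M (W r i j)"
  and is_def: "int is = snd M mod 3" and js_def: "int js = fst M mod 3"
  and p_def: "p = (2 * is) mod 3" and q_def: "q = (2 * js) mod 3"
  and m1: "3 * m1 + int q = 2 * fst M" and m2: "3 * m2 + int p = 2 * snd M"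
  shows "coef (iota (d3_mult r (d3_star r) (p, q))) m1 m2 =
     (if r (is, js) \<noteq> 0 \<and> W r is js = M
      then eps ^ (js * is) * lc (iota (r (is, js))) * (eps ^ (is * js) * cnj (lc (iota (r (is, js)))))
      else 0)"
proof -
  have isl: "is < 3" using is_def by (metis of_nat_less_iff of_nat_numeral pos_mod_bound zero_less_numeral)
  have jsl: "js < 3" using js_def by (metis of_nat_less_iff of_nat_numeral pos_mod_bound zero_less_numeral)
  have pq: "p < 3" "q < 3" using p_def q_def by simp_all
  have "coef (iota (d3_mult r (d3_star r) (p, q))) m1 m2 =
    (\<Sum>i<3::nat. \<Sum>j<3::nat. \<Sum>k<3::nat. \<Sum>l<3::nat. coef (iota (if (i + k) mod 3 = p \<and> (j + l) mod 3 = q then const2 eps ^ (j * k) * aF ^ ((i + k) div 3)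
             * bF ^ ((j + l) div 3) * r (i, j) * d3_star r (k, l) else 0)) m1 m2)"
    using pq by (simp add: d3_mult_def coef_iota_sum)
  also have "\<dots> = (\<Sum>i<3::nat. \<Sum>j<3::nat. \<Sum>k<3::nat. \<Sum>l<3::nat.
     if i = is \<and> j = js \<and> k = is \<and> l = js \<and> (r (is, js) \<noteq> 0 \<and> W r is js = M)
      then eps ^ (js * is) * lc (iota (r (is, js))) * (eps ^ (is * js) * cnj (lc (iota (r (is, js)))))
      else 0)"
    by (intro sum.cong refl, unfold lessThan_iff, subst term_coef[OF Mmin _ _ _ _ is_def js_def p_def q_def m1 m2])
       (simp_all)
  also note collapse4[OF isl jsl]
  finally show ?thesis .
qed




lemma lex_min:
  assumes "finite A" "A \<noteq> {}"
  shows "\<exists>x\<in>A. \<forall>y\<in>A. lexle (f x) (f y)"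
  using assms
proof (induction A rule: finite_ne_induct)
  case (singleton x) thus ?case by (auto simp: lexle_def)
next
  case (insert x F)
  then obtain m where m: "m \<in> F" "\<forall>y\<in>F. lexle (f m) (f y)" by blast
  show ?case
  proof (cases "lexle (f m) (f x)")
    case True thus ?thesis using m by auto
  next
    case False
    hence "lexle (f x) (f m)" by (auto simp: lexle_def)
    hence "\<forall>y\<in>F. lexle (f x) (f y)" using m(2) by (auto simp: lexle_def)
    thus ?thesis by (auto simp: lexle_def)
  qed
qed

lemma foldr_eval: "foldr d3_add (map f rs) d3_zero x = sum_list (map (\<lambda>r. f r x) rs)"
  by (induction rs) (auto simp: d3_add_def d3_zero_def)

lemma coef_iota_sum_list: "coef (iota (sum_list xs)) m1 m2 = sum_list (map (\<lambda>x. coef (iota x) m1 m2) xs)"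
  by (induction xs) (auto simp: rhomD[OF rhom_iota] coef_add coef_0)

lemma sum_list_if_pull:
  "sum_list (map (\<lambda>r. if P r then c * complex_of_real (h r) else 0) xs) =
   c * complex_of_real (sum_list (map (\<lambda>r. if P r then h r else 0) xs))"
  by (induction xs) (auto simp: algebra_simps)

lemma sum_list_pos:
  fixes g :: "'a \<Rightarrow> real"
  assumes "\<forall>x\<in>set xs. 0 \<le> g x" "y \<in> set xs" "0 < g y"
  shows "0 < sum_list (map g xs)"
  using assms
proof (induction xs)
  case Nil thus ?case by simp
next
  case (Cons a xs)
  show ?case
  proof (cases "y = a")
    case True
    have "0 \<le> sum_list (map g xs)" using Cons.prems(1) by (intro sum_list_nonneg) auto
    thus ?thesis using True Cons.prems by simp
  next
    case False
    hence "0 < sum_list (map g xs)" using Cons by auto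
    thus ?thesis using Cons.prems(1) by simp
  qed
qed

lemma mult_zero_star: "\<forall>i<3. \<forall>j<3. r (i, j) = 0 \<Longrightarrow> d3_mult r v = d3_zero"
  by (auto simp: d3_mult_def d3_zero_def fun_eq_iff intro!: sum.neutral)

lemma part1: "formally_real D3 d3_add d3_mult d3_zero d3_star"
  unfolding formally_real_def
proof (intro allI impI)
  fix rs :: "(nat \<times> nat \<Rightarrow> rat2) list"
  assume ne: "rs \<noteq> []" and "set rs \<subseteq> D3" and nzs: "\<forall>r\<in>set rs. d3_mult r (d3_star r) \<noteq> d3_zero"
  define A where "A = {(r, i, j). r \<in> set rs \<and> i < 3 \<and> j < (3::nat) \<and> r (i, j) \<noteq> 0}"
  have "A \<subseteq> set rs \<times> {..<3} \<times> {..<3}" by (auto simp: A_def)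
  hence finA: "finite A" by (rule finite_subset) auto
  obtain r1 where r1: "r1 \<in> set rs" using ne by (cases rs) auto
  then obtain i1 j1 where "i1 < 3" "j1 < 3" "r1 (i1, j1) \<noteq> 0"
    using nzs mult_zero_star by blast
  hence "A \<noteq> {}" using r1 by (auto simp: A_def)
  then obtain x0 where x0: "x0 \<in> A" "\<forall>y\<in>A. lexle ((\<lambda>(r, i, j). W r i j) x0) ((\<lambda>(r, i, j). W r i j) y)"
    using lex_min[OF finA] by blast
  obtain r0 i0 j0 where x0e: "x0 = (r0, i0, j0)" by (cases x0) auto
  have r0: "r0 \<in> set rs" "i0 < 3" "j0 < 3" "r0 (i0, j0) \<noteq> 0" using x0(1) by (auto simp: A_def x0e)
  define M where "M = W r0 i0 j0"
  have Mmin: "lexle M (W r i j)" if "r \<in> set rs" "i < 3" "j < 3" "r (i, j) \<noteq> 0" for r i j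
    using x0(2) that by (auto simp: A_def x0e M_def)
  define "is" where "is = nat (snd M mod 3)"
  define js where "js = nat (fst M mod 3)"
  have is_def': "int is = snd M mod 3" by (simp add: is_def)
  have js_def': "int js = fst M mod 3" by (simp add: js_def)
  have "snd M mod 3 = int i0" "fst M mod 3 = int j0" using W_mod[OF r0(2,3)] by (auto simp: M_def)
  hence ij0: "is = i0" "js = j0" by (simp_all add: is_def js_def)
  define p where "p = (2 * is) mod 3"
  define q where "q = (2 * js) mod 3"
  define m1 where "m1 = (2 * fst M - int q) div 3"
  define m2 where "m2 = (2 * snd M - int p) div 3"
  have "int q = (2 * (fst M mod 3)) mod 3" by (simp add: q_def js_def'[symmetric] zmod_int)
  hence m1e: "3 * m1 + int q = 2 * fst M" unfolding m1_def by presburger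
  have "int p = (2 * (snd M mod 3)) mod 3" by (simp add: p_def is_def'[symmetric] zmod_int)
  hence m2e: "3 * m2 + int p = 2 * snd M" unfolding m2_def by presburger
  define lcr where "lcr r = lc (iota (r (is, js)))" for r :: "nat \<times> nat \<Rightarrow> rat2"
  define P where "P r \<longleftrightarrow> r (is, js) \<noteq> 0 \<and> W r is js = M" for r :: "nat \<times> nat \<Rightarrow> rat2"
  have each: "coef (iota (d3_mult r (d3_star r) (p, q))) m1 m2 =
      (if P r then eps ^ (js * is + is * js) * complex_of_real ((cmod (lcr r))\<^sup>2) else 0)"
    if "r \<in> set rs" for r
  proof -
    have "coef (iota (d3_mult r (d3_star r) (p, q))) m1 m2 =
     (if r (is, js) \<noteq> 0 \<and> W r is js = M
      then eps ^ (js * is) * lc (iota (r (is, js))) * (eps ^ (is * js) * cnj (lc (iota (r (is, js)))))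
      else 0)"
      by (rule r_coef[OF Mmin[OF that] is_def' js_def' p_def q_def m1e m2e])
    thus ?thesis unfolding P_def lcr_def complex_norm_square power_add by (simp add: mult_ac)
  qed
  have "coef (iota (foldr d3_add (map (\<lambda>r. d3_mult r (d3_star r)) rs) d3_zero (p, q))) m1 m2 =
     sum_list (map (\<lambda>r. coef (iota (d3_mult r (d3_star r) (p, q))) m1 m2) rs)"
    by (simp add: foldr_eval coef_iota_sum_list o_def)
  also have "\<dots> = sum_list (map (\<lambda>r. if P r then eps ^ (js * is + is * js) * complex_of_real ((cmod (lcr r))\<^sup>2) else 0) rs)"
    by (intro arg_cong[where f = sum_list] map_cong refl each)
  also have "\<dots> = eps ^ (js * is + is * js) * complex_of_real (sum_list (map (\<lambda>r. if P r then (cmod (lcr r))\<^sup>2 else 0) rs))"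
    by (rule sum_list_if_pull)
  finally have C: "coef (iota (foldr d3_add (map (\<lambda>r. d3_mult r (d3_star r)) rs) d3_zero (p, q))) m1 m2 =
     eps ^ (js * is + is * js) * complex_of_real (sum_list (map (\<lambda>r. if P r then (cmod (lcr r))\<^sup>2 else 0) rs))" .
  have P0: "P r0" using r0 ij0 by (simp add: P_def M_def)
  have "iota (r0 (i0, j0)) \<noteq> 0" using r0(4) by (simp add: rhomD[OF rhom_iota])
  hence "lcr r0 \<noteq> 0" using ij0 by (simp add: lcr_def lc_nz)
  hence "0 < sum_list (map (\<lambda>r. if P r then (cmod (lcr r))\<^sup>2 else 0) rs)"
    by (intro sum_list_pos[OF _ r0(1)]) (auto simp: P0)
  hence "coef (iota (foldr d3_add (map (\<lambda>r. d3_mult r (d3_star r)) rs) d3_zero (p, q))) m1 m2 \<noteq> 0"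
    unfolding C using eps_nz by simp
  thus "foldr d3_add (map (\<lambda>r. d3_mult r (d3_star r)) rs) d3_zero \<noteq> d3_zero"
    by (auto simp: d3_zero_def rhomD[OF rhom_iota] coef_0)
qed



theorem mainTheorem8:
  shows "formally_real D3 d3_add d3_mult d3_zero d3_star \<and>
         \<not> formally_real (UNIV :: (rat2^3^3) set) (+) (**) 0 sharp"
  using part1 part2 by blast

end
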